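(* Let $V$ be an upper probability on $(\Omega,\mathcal{F})$ that is continuous from below, and let $\theta:\Omega\to\Omega$ be a measurable map preserving $V$ (i.e. $V(\theta^{-1}A)=V(A)$ for all $A\in\mathcal{F}$). Consider the statements: (i) $\theta$ is ergodic with respect to $V$; (ii) for every $B\in\mathcal{F}$ with $V(\theta^{-1}B\,\triangle\, B)=0$, we have $V(B)=0$ or $V(B^c)=0$; (iii) for every $A\in\mathcal{F}$ with $V(A)>0$, $V\big(\big(\bigcup_{n=1}^{\infty}\theta^{-n}A\big)^{c}\big)=0$; (iv) for all $A,B\in\mathcal{F}$ with $V(A)>0$ and $V(B)>0$ there exists $n\in\mathbb{N}$ with $V(\theta^{-n}A\cap B)>0$. Then (i) and (ii) are equivalent, (iii) implies (iv), and (iv) implies (i). Moreover, if $V$ is continuous, then (ii) implies (iii), so all four statements are equivalent.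
   Context: $\Delta(\Omega,\mathcal{F})$ denotes the set of finitely additive probabilities on $\mathcal{F}$. An upper probability is a set function $V(A)=\sup_{P\in\mathcal{P}}P(A)$, $A\in\mathcal{F}$, for some nonempty $\mathcal{P}\subseteq\Delta(\Omega,\mathcal{F})$. $V$ is continuous from below if $V(A_n)\to V(A)$ whenever $A_n\uparrow A$, and continuous if in addition $V(A_n)\to V(A)$ whenever $A_n\downarrow A$. A set $B\in\mathcal{F}$ is $\theta$-invariant if $\theta^{-1}B=B$. For a capacity $\mu$ (a monotone set function $\mathcal{F}\to[0,1]$ with $\mu(\emptyset)=0,\mu(\Omega)=1$) preserved by $\theta$, $\theta$ is ergodic with respect to $\mu$ if for every $\theta$-invariant set $B$: $\mu(B)\in\{0,1\}$, and $\mu(B)=0$ or $\mu(B^c)=0$. *)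

theory Defs
  imports "HOL-Analysis.Analysis"
begin

text \<open>The measurable space (Omega, F) is represented by a measure M: Omega = space M,
  F = sets M (the measure itself is irrelevant).\<close>

definition fa_prob :: "'a measure \<Rightarrow> ('a set \<Rightarrow> real) \<Rightarrow> bool" where
  "fa_prob M P \<longleftrightarrow>
     (\<forall>A\<in>sets M. 0 \<le> P A) \<and> P (space M) = 1 \<and>
     (\<forall>A\<in>sets M. \<forall>B\<in>sets M. A \<inter> B = {} \<longrightarrow> P (A \<union> B) = P A + P B)"

definition upper_prob :: "'a measure \<Rightarrow> ('a set \<Rightarrow> real) \<Rightarrow> bool" where
  "upper_prob M V \<longleftrightarrow>
     (\<exists>\<P>. \<P> \<noteq> {} \<and> (\<forall>P\<in>\<P>. fa_prob M P) \<and> (\<forall>A\<in>sets M. V A = (SUP P\<in>\<P>. P A)))"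

definition cont_from_below :: "'a measure \<Rightarrow> ('a set \<Rightarrow> real) \<Rightarrow> bool" where
  "cont_from_below M V \<longleftrightarrow>
     (\<forall>A. range A \<subseteq> sets M \<longrightarrow> incseq A \<longrightarrow> (\<lambda>n. V (A n)) \<longlonglongrightarrow> V (\<Union>n. A n))"

definition cont_from_above :: "'a measure \<Rightarrow> ('a set \<Rightarrow> real) \<Rightarrow> bool" where
  "cont_from_above M V \<longleftrightarrow>
     (\<forall>A. range A \<subseteq> sets M \<longrightarrow> decseq A \<longrightarrow> (\<lambda>n. V (A n)) \<longlonglongrightarrow> V (\<Inter>n. A n))"

definition continuous_sf :: "'a measure \<Rightarrow> ('a set \<Rightarrow> real) \<Rightarrow> bool" where
  "continuous_sf M V \<longleftrightarrow> cont_from_below M V \<and> cont_from_above M V"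

definition preim :: "'a measure \<Rightarrow> ('a \<Rightarrow> 'a) \<Rightarrow> 'a set \<Rightarrow> 'a set" where
  "preim M f A = f -` A \<inter> space M"

definition preserves :: "'a measure \<Rightarrow> ('a set \<Rightarrow> real) \<Rightarrow> ('a \<Rightarrow> 'a) \<Rightarrow> bool" where
  "preserves M V \<theta> \<longleftrightarrow> (\<forall>A\<in>sets M. V (preim M \<theta> A) = V A)"

definition invariant_set :: "'a measure \<Rightarrow> ('a \<Rightarrow> 'a) \<Rightarrow> 'a set \<Rightarrow> bool" where
  "invariant_set M \<theta> B \<longleftrightarrow> B \<in> sets M \<and> preim M \<theta> B = B"

definition ergodic :: "'a measure \<Rightarrow> ('a set \<Rightarrow> real) \<Rightarrow> ('a \<Rightarrow> 'a) \<Rightarrow> bool" where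
  "ergodic M \<mu> \<theta> \<longleftrightarrow>
     (\<forall>B. invariant_set M \<theta> B \<longrightarrow>
        \<mu> B \<in> {0, 1} \<and> (\<mu> B = 0 \<or> \<mu> (space M - B) = 0))"

definition cond_ii :: "'a measure \<Rightarrow> ('a set \<Rightarrow> real) \<Rightarrow> ('a \<Rightarrow> 'a) \<Rightarrow> bool" where
  "cond_ii M V \<theta> \<longleftrightarrow>
     (\<forall>B\<in>sets M. V ((preim M \<theta> B - B) \<union> (B - preim M \<theta> B)) = 0 \<longrightarrow>
        V B = 0 \<or> V (space M - B) = 0)"

definition cond_iii :: "'a measure \<Rightarrow> ('a set \<Rightarrow> real) \<Rightarrow> ('a \<Rightarrow> 'a) \<Rightarrow> bool" where
  "cond_iii M V \<theta> \<longleftrightarrow>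
     (\<forall>A\<in>sets M. V A > 0 \<longrightarrow>
        V (space M - (\<Union>n\<in>{1..}. preim M (\<theta> ^^ n) A)) = 0)"

definition cond_iv :: "'a measure \<Rightarrow> ('a set \<Rightarrow> real) \<Rightarrow> ('a \<Rightarrow> 'a) \<Rightarrow> bool" where
  "cond_iv M V \<theta> \<longleftrightarrow>
     (\<forall>A\<in>sets M. \<forall>B\<in>sets M. V A > 0 \<longrightarrow> V B > 0 \<longrightarrow>
        (\<exists>n\<ge>1. V (preim M (\<theta> ^^ n) A \<inter> B) > 0))"

end

theory Submission
  imports Defs
begin

lemma fa_empty: "fa_prob M P \<Longrightarrow> P {} = 0"
  unfolding fa_prob_def by (metis Int_empty_left add_cancel_left_right sets.empty_sets sup_bot.right_neutral)

lemma fa_mono: assumes "fa_prob M P" "A \<in> sets M" "B \<in> sets M" "A \<subseteq> B" shows "P A \<le> P B"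
proof -
  have "B = A \<union> (B - A)" using assms by auto
  moreover have "P (A \<union> (B - A)) = P A + P (B - A)" "0 \<le> P (B - A)"
    using assms unfolding fa_prob_def by (meson Diff_disjoint sets.Diff)+
  ultimately show ?thesis by simp
qed

lemma fa_sub: assumes "fa_prob M P" "A \<in> sets M" "B \<in> sets M" shows "P (A \<union> B) \<le> P A + P B"
proof -
  have "A \<union> B = A \<union> (B - A)" by auto
  moreover have "P (A \<union> (B - A)) = P A + P (B - A)"
    using assms unfolding fa_prob_def by (meson Diff_disjoint sets.Diff)
  moreover have "P (B - A) \<le> P B" using fa_mono[OF assms(1)] assms by auto
  ultimately show ?thesis by simp
qed

lemma fa_le1: assumes "fa_prob M P" "A \<in> sets M" shows "P A \<le> 1"
  using fa_mono[OF assms(1) assms(2) sets.top] assms sets.sets_into_space unfolding fa_prob_def by auto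

lemma fa_nonneg: assumes "fa_prob M P" "A \<in> sets M" shows "0 \<le> P A"
  using assms unfolding fa_prob_def by auto

lemma up_props:
  assumes "upper_prob M V"
  shows "V {} = 0" "V (space M) = 1"
    "\<And>A. A \<in> sets M \<Longrightarrow> 0 \<le> V A"
    "\<And>A. A \<in> sets M \<Longrightarrow> V A \<le> 1"
    "\<And>A B. A \<in> sets M \<Longrightarrow> B \<in> sets M \<Longrightarrow> A \<subseteq> B \<Longrightarrow> V A \<le> V B"
    "\<And>A B. A \<in> sets M \<Longrightarrow> B \<in> sets M \<Longrightarrow> V (A \<union> B) \<le> V A + V B"
proof -
  obtain \<P> where ne: "\<P> \<noteq> {}" and fa: "\<forall>P\<in>\<P>. fa_prob M P"
    and V: "\<forall>A\<in>sets M. V A = (SUP P\<in>\<P>. P A)"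
    using assms unfolding upper_prob_def by blast
  have bdd: "bdd_above ((\<lambda>P. P A) ` \<P>)" if "A \<in> sets M" for A
    using fa_le1 fa that by (intro bdd_aboveI[where M=1]) auto
  have "(SUP P\<in>\<P>. P {}) = (SUP P\<in>\<P>. (0::real))"
    by (rule SUP_cong) (use fa fa_empty in blast)+
  then show "V {} = 0" using V ne by simp
  have "(SUP P\<in>\<P>. P (space M)) = (SUP P\<in>\<P>. (1::real))"
    by (rule SUP_cong) (use fa in \<open>auto simp: fa_prob_def\<close>)
  then show "V (space M) = 1" using V ne by simp
  show "0 \<le> V A" if "A \<in> sets M" for A
  proof -
    obtain P where "P \<in> \<P>" using ne by blast
    then show ?thesis using V that cSUP_upper[OF _ bdd[OF that], of P] fa_nonneg fa by force
  qed
  show "V A \<le> 1" if "A \<in> sets M" for A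
  proof -
    have "(SUP P\<in>\<P>. P A) \<le> 1" using ne fa fa_le1 that by (intro cSUP_least) blast+
    then show ?thesis using V that by simp
  qed
  show "V A \<le> V B" if "A \<in> sets M" "B \<in> sets M" "A \<subseteq> B" for A B
  proof -
    have "(SUP P\<in>\<P>. P A) \<le> (SUP P\<in>\<P>. P B)"
      using ne bdd[OF that(2)] by (rule cSUP_mono) (use fa fa_mono that in blast)
    then show ?thesis using V that by simp
  qed
  show "V (A \<union> B) \<le> V A + V B" if "A \<in> sets M" "B \<in> sets M" for A B
  proof -
    have "P (A \<union> B) \<le> V A + V B" if "P \<in> \<P>" for P
    proof -
      have "P (A \<union> B) \<le> P A + P B" using fa_sub fa that \<open>A \<in> sets M\<close> \<open>B \<in> sets M\<close> by blast
      also have "\<dots> \<le> V A + V B"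
        using V that \<open>A \<in> sets M\<close> \<open>B \<in> sets M\<close> cSUP_upper bdd by (metis add_mono)
      finally show ?thesis .
    qed
    then show ?thesis using V that ne by (auto intro!: cSUP_least)
  qed
qed

lemma null_union:
  assumes up: "upper_prob M V" and cb: "cont_from_below M V"
    and A: "range (A :: nat \<Rightarrow> _)  \<subseteq> sets M" and z: "\<And>n. V (A n) = 0"
  shows "V (\<Union>n. A n) = 0"
proof -
  define B where "B n = (\<Union>k\<in>{..<n}. A k)" for n
  have Bs: "B n \<in> sets M" for n using A unfolding B_def by auto
  have B0: "V (B n) = 0" for n
  proof (induction n)
    case 0 then show ?case using up_props(1)[OF up] by (simp add: B_def)
  next
    case (Suc n)
    have "B (Suc n) = A n \<union> B n" unfolding B_def by (auto simp: lessThan_Suc)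
    then have "V (B (Suc n)) \<le> V (A n) + V (B n)" using up_props(6)[OF up] A Bs by auto
    moreover have "0 \<le> V (B (Suc n))" using up_props(3)[OF up] Bs by auto
    ultimately show ?case using Suc z by (metis add.right_neutral order_antisym)
  qed
  have inc: "incseq B" unfolding incseq_def B_def by (meson UN_mono lessThan_subset_iff order_refl)
  have un: "(\<Union>n. B n) = (\<Union>n. A n)" unfolding B_def by blast
  have "(\<lambda>n. V (B n)) \<longlonglongrightarrow> V (\<Union>n. B n)" using cb inc Bs unfolding cont_from_below_def by blast
  then have "(\<lambda>n. 0::real) \<longlonglongrightarrow> V (\<Union>n. B n)" using B0 by simp
  then show ?thesis using un LIMSEQ_unique[OF _ tendsto_const] by metis
qed

lemma meas_iter: "\<theta> \<in> M \<rightarrow>\<^sub>M M \<Longrightarrow> \<theta>^^n \<in> M \<rightarrow>\<^sub>M M"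
  by (induction n) (auto intro: measurable_comp)

lemma iter_space: "\<theta> \<in> M \<rightarrow>\<^sub>M M \<Longrightarrow> x \<in> space M \<Longrightarrow> (\<theta>^^n) x \<in> space M"
  using meas_iter measurable_space by metis

lemma preim_sets: "\<theta> \<in> M \<rightarrow>\<^sub>M M \<Longrightarrow> A \<in> sets M \<Longrightarrow> preim M (\<theta>^^n) A \<in> sets M"
  unfolding preim_def using meas_iter measurable_sets by metis

lemma preim_sets1: "\<theta> \<in> M \<rightarrow>\<^sub>M M \<Longrightarrow> A \<in> sets M \<Longrightarrow> preim M \<theta> A \<in> sets M"
  unfolding preim_def using measurable_sets by metis

lemma preim_space: "x \<in> preim M f A \<Longrightarrow> x \<in> space M"
  unfolding preim_def by auto

lemma preim_shift:
  assumes "\<theta> \<in> M \<rightarrow>\<^sub>M M" "x \<in> space M"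
  shows "(\<theta>^^k) x \<in> preim M (\<theta>^^n) A \<longleftrightarrow> x \<in> preim M (\<theta>^^(n+k)) A"
  using iter_space[OF assms] assms(2) by (simp add: preim_def funpow_add)

lemma preim_iter_preim:
  assumes "\<theta> \<in> M \<rightarrow>\<^sub>M M"
  shows "preim M (\<theta>^^k) (preim M (\<theta>^^n) A) = preim M (\<theta>^^(n+k)) A"
  apply (rule set_eqI)
  subgoal for x using preim_shift[OF assms, of x k n A] preim_space[of x M "\<theta>^^(n+k)" A]
    by (auto simp: preim_def[of M "\<theta>^^k"])
  done

lemma preim_iter_preim1:
  assumes "\<theta> \<in> M \<rightarrow>\<^sub>M M"
  shows "preim M \<theta> (preim M (\<theta>^^n) A) = preim M (\<theta>^^(Suc n)) A"
  using preim_iter_preim[OF assms, of 1 n A] by simp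

lemma preim_iter_preim2:
  assumes "\<theta> \<in> M \<rightarrow>\<^sub>M M"
  shows "preim M (\<theta>^^n) (preim M \<theta> A) = preim M (\<theta>^^(Suc n)) A"
  using preim_iter_preim[OF assms, of n 1 A] by simp

lemma preserves_iter:
  assumes "\<theta> \<in> M \<rightarrow>\<^sub>M M" "preserves M V \<theta>" "A \<in> sets M"
  shows "V (preim M (\<theta>^^n) A) = V A"
proof (induction n)
  case 0 then show ?case using assms(3) sets.sets_into_space by (simp add: preim_def Int_absorb2)
next
  case (Suc n)
  then show ?case using preim_iter_preim1[OF assms(1)] preim_sets[OF assms(1,3)] assms(2)
    unfolding preserves_def by metis
qed

lemma invariant_iter:
  assumes "\<theta> \<in> M \<rightarrow>\<^sub>M M" "invariant_set M \<theta> B"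
  shows "preim M (\<theta>^^n) B = B"
proof (induction n)
  case 0 then show ?case using assms(2) sets.sets_into_space unfolding invariant_set_def
    by (simp add: preim_def Int_absorb2)
next
  case (Suc n)
  then show ?case using preim_iter_preim1[OF assms(1), of n B] assms(2) unfolding invariant_set_def by metis
qed

definition limsup_set where
  "limsup_set M \<theta> A = (\<Inter>m. \<Union>n\<in>{m..}. preim M (\<theta>^^n) A)"

lemma limsup_sets: "\<theta> \<in> M \<rightarrow>\<^sub>M M \<Longrightarrow> A \<in> sets M \<Longrightarrow> limsup_set M \<theta> A \<in> sets M"
proof -
  assume a: "\<theta> \<in> M \<rightarrow>\<^sub>M M" "A \<in> sets M"
  have "(\<Union>n\<in>{m..}. preim M (\<theta>^^n) A) \<in> sets M" for m
    by (rule sets.countable_UN') (auto intro: preim_sets a)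
  then show ?thesis unfolding limsup_set_def by (intro sets.countable_INT') auto
qed

lemma limsup_invariant:
  assumes "\<theta> \<in> M \<rightarrow>\<^sub>M M" "A \<in> sets M"
  shows "invariant_set M \<theta> (limsup_set M \<theta> A)"
  unfolding invariant_set_def
proof (intro conjI)
  show "limsup_set M \<theta> A \<in> sets M" using limsup_sets assms by blast
  show "preim M \<theta> (limsup_set M \<theta> A) = limsup_set M \<theta> A"
  proof (intro set_eqI iffI)
    fix x assume x: "x \<in> preim M \<theta> (limsup_set M \<theta> A)"
    then have xs: "x \<in> space M" and tx: "\<theta> x \<in> limsup_set M \<theta> A" unfolding preim_def by auto
    have "\<exists>n\<ge>m. x \<in> preim M (\<theta>^^n) A" for m
    proof -
      obtain n where "n \<ge> m" "\<theta> x \<in> preim M (\<theta>^^n) A" using tx unfolding limsup_set_def by blast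
      then show ?thesis using preim_shift[OF assms(1) xs, of 1 n A] by (intro exI[of _ "n+1"]) auto
    qed
    then show "x \<in> limsup_set M \<theta> A" unfolding limsup_set_def by auto
  next
    fix x assume x: "x \<in> limsup_set M \<theta> A"
    then obtain n0 where "x \<in> preim M (\<theta>^^n0) A" unfolding limsup_set_def by blast
    then have xs: "x \<in> space M" unfolding preim_def by auto
    have "\<exists>n\<ge>m. \<theta> x \<in> preim M (\<theta>^^n) A" for m
    proof -
      obtain n where "n \<ge> Suc m" "x \<in> preim M (\<theta>^^n) A" using x unfolding limsup_set_def by blast
      then show ?thesis using preim_shift[OF assms(1) xs, of 1 "n - 1" A] by (intro exI[of _ "n-1"]) auto
    qed
    then have "\<theta> x \<in> limsup_set M \<theta> A" unfolding limsup_set_def by auto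
    then show "x \<in> preim M \<theta> (limsup_set M \<theta> A)" using xs unfolding preim_def by auto
  qed
qed

lemma zero_or_one:
  assumes "upper_prob M V" "B \<in> sets M" "V B = 0 \<or> V (space M - B) = 0"
  shows "V B \<in> {0, 1}"
proof (cases "V B = 0")
  case False
  then have c: "V (space M - B) = 0" using assms by auto
  have "V (space M) \<le> V B + V (space M - B)"
    using up_props(6)[OF assms(1), of B "space M - B"] assms(2) sets.sets_into_space
    by (metis Diff_partition sets.Diff sets.top)
  then show ?thesis using c up_props(2,4)[OF assms(1)] assms(2) by fastforce
qed simp

lemma i_to_ii:
  assumes up: "upper_prob M V" and cb: "cont_from_below M V"
    and th: "\<theta> \<in> M \<rightarrow>\<^sub>M M" and pr: "preserves M V \<theta>"
    and erg: "ergodic M V \<theta>"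
  shows "cond_ii M V \<theta>"
  unfolding cond_ii_def
proof (intro ballI impI)
  fix B assume B: "B \<in> sets M"
  define D where "D = (preim M \<theta> B - B) \<union> (B - preim M \<theta> B)"
  assume "V ((preim M \<theta> B - B) \<union> (B - preim M \<theta> B)) = 0"
  then have VD: "V D = 0" unfolding D_def .
  have Ds: "D \<in> sets M" unfolding D_def using B preim_sets1[OF th B] by auto
  define Bn where "Bn n = preim M (\<theta>^^n) B" for n
  have Bns: "Bn n \<in> sets M" for n unfolding Bn_def using preim_sets[OF th B] .
  define E where "E n = (Bn n - B) \<union> (B - Bn n)" for n
  have Es: "E n \<in> sets M" for n unfolding E_def using Bns B by auto
  have VE: "V (E n) = 0" for n
  proof (induction n)
    case 0
    have "Bn 0 = B" unfolding Bn_def preim_def using B sets.sets_into_space by auto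
    then show ?case unfolding E_def using up_props(1)[OF up] by simp
  next
    case (Suc n)
    have F: "preim M (\<theta>^^n) D = (Bn (Suc n) - Bn n) \<union> (Bn n - Bn (Suc n))"
      unfolding D_def Bn_def preim_iter_preim2[OF th, symmetric] by (auto simp: preim_def)
    have VF: "V (preim M (\<theta>^^n) D) = 0" using preserves_iter[OF th pr Ds] VD by simp
    have Fs: "preim M (\<theta>^^n) D \<in> sets M" using preim_sets[OF th Ds] .
    have "E (Suc n) \<subseteq> preim M (\<theta>^^n) D \<union> E n" unfolding F E_def by auto
    moreover have FE: "preim M (\<theta>^^n) D \<union> E n \<in> sets M" using Fs Es by blast
    ultimately have "V (E (Suc n)) \<le> V (preim M (\<theta>^^n) D \<union> E n)"
      using up_props(5)[OF up, OF Es[of "Suc n"] FE] by simp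
    also have "\<dots> \<le> V (preim M (\<theta>^^n) D) + V (E n)" by (rule up_props(6)[OF up, OF Fs Es])
    finally show ?case using VF Suc up_props(3)[OF up, OF Es[of "Suc n"]] by linarith
  qed
  define L where "L = limsup_set M \<theta> B"
  have Ls: "L \<in> sets M" unfolding L_def using limsup_sets[OF th B] .
  have Linv: "invariant_set M \<theta> L" unfolding L_def using limsup_invariant[OF th B] .
  define D' where "D' = (L - B) \<union> (B - L)"
  have D's: "D' \<in> sets M" unfolding D'_def using Ls B by auto
  have "D' \<subseteq> (\<Union>n. E n)"
  proof
    fix x assume "x \<in> D'"
    then consider "x \<in> L" "x \<notin> B" | "x \<in> B" "x \<notin> L" unfolding D'_def by auto
    then show "x \<in> (\<Union>n. E n)"
    proof cases
      case 1
      then obtain n where "x \<in> Bn n" unfolding L_def limsup_set_def Bn_def by blast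
      then show ?thesis using 1 unfolding E_def by auto
    next
      case 2
      then obtain m where "x \<notin> (\<Union>n\<in>{m..}. Bn n)" unfolding L_def limsup_set_def Bn_def by blast
      then have "x \<notin> Bn m" by auto
      then show ?thesis using 2 unfolding E_def by auto
    qed
  qed
  moreover have "V (\<Union>n. E n) = 0" by (rule null_union[OF up cb _ VE]) (use Es in blast)
  moreover have "(\<Union>n. E n) \<in> sets M" using Es by auto
  ultimately have "V D' \<le> 0"
    using up_props(5)[OF up, OF D's, of "\<Union>n. E n"] by simp
  then have VD': "V D' = 0" using up_props(3)[OF up, OF D's] by simp
  have c: "V L = 0 \<or> V (space M - L) = 0" using erg Linv unfolding ergodic_def by blast
  have LD: "L \<union> D' \<in> sets M" using Ls D's by blast
  have "B \<subseteq> L \<union> D'" unfolding D'_def by auto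
  then have "V B \<le> V (L \<union> D')" using up_props(5)[OF up, OF B LD] by simp
  also have "\<dots> \<le> V L + V D'" using up_props(6)[OF up, OF Ls D's] .
  finally have 1: "V B \<le> V L" using VD' by simp
  have SL: "space M - L \<in> sets M" using Ls by blast
  have SB: "space M - B \<in> sets M" using B by blast
  have SLD: "(space M - L) \<union> D' \<in> sets M" using SL D's by blast
  have "space M - B \<subseteq> (space M - L) \<union> D'" unfolding D'_def by auto
  then have "V (space M - B) \<le> V ((space M - L) \<union> D')" using up_props(5)[OF up, OF SB SLD] by simp
  also have "\<dots> \<le> V (space M - L) + V D'" using up_props(6)[OF up, OF SL D's] .
  finally have 2: "V (space M - B) \<le> V (space M - L)" using VD' by simp
  have "0 \<le> V B" "0 \<le> V (space M - B)" using up_props(3)[OF up] B SB by auto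
  then show "V B = 0 \<or> V (space M - B) = 0" using c 1 2 by linarith
qed

lemma ii_to_i:
  assumes up: "upper_prob M V" and ii: "cond_ii M V \<theta>"
  shows "ergodic M V \<theta>"
  unfolding ergodic_def
proof (intro allI impI)
  fix B assume "invariant_set M \<theta> B"
  then have B: "B \<in> sets M" "preim M \<theta> B = B" unfolding invariant_set_def by auto
  then have "V B = 0 \<or> V (space M - B) = 0" using ii up_props(1)[OF up] unfolding cond_ii_def by auto
  then show "V B \<in> {0, 1} \<and> (V B = 0 \<or> V (space M - B) = 0)" using zero_or_one[OF up B(1)] by auto
qed

lemma iii_to_iv:
  assumes up: "upper_prob M V" and cb: "cont_from_below M V"
    and th: "\<theta> \<in> M \<rightarrow>\<^sub>M M" and iii: "cond_iii M V \<theta>"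
  shows "cond_iv M V \<theta>"
  unfolding cond_iv_def
proof (intro ballI impI)
  fix A B assume A: "A \<in> sets M" and B: "B \<in> sets M" and VA: "V A > 0" and VB: "V B > 0"
  show "\<exists>n\<ge>1. V (preim M (\<theta> ^^ n) A \<inter> B) > 0"
  proof (rule ccontr)
    assume nt: "\<not> ?thesis"
    have z: "n \<ge> 1 \<Longrightarrow> V (preim M (\<theta> ^^ n) A \<inter> B) = 0" for n
    proof -
      assume n: "n \<ge> 1"
      have "preim M (\<theta> ^^ n) A \<inter> B \<in> sets M" using preim_sets[OF th A] B by blast
      then have "0 \<le> V (preim M (\<theta> ^^ n) A \<inter> B)" using up_props(3)[OF up] by blast
      moreover have "\<not> V (preim M (\<theta> ^^ n) A \<inter> B) > 0" using nt n by blast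
      ultimately show ?thesis by linarith
    qed
    define U where "U = (\<Union>n\<in>{1..}. preim M (\<theta> ^^ n) A)"
    have VU: "V (space M - U) = 0" using iii A VA unfolding cond_iii_def U_def by blast
    have Us: "U \<in> sets M" unfolding U_def using preim_sets[OF th A] by auto
    define C where "C n = (if n = 0 then space M - U else preim M (\<theta> ^^ n) A \<inter> B)" for n
    have Cs: "range C \<subseteq> sets M" unfolding C_def using Us preim_sets[OF th A] B by auto
    have Cz: "V (C n) = 0" for n unfolding C_def using VU z by auto
    have "B \<subseteq> (\<Union>n. C n)"
    proof
      fix x assume x: "x \<in> B"
      show "x \<in> (\<Union>n. C n)"
      proof (cases "x \<in> U")
        case True
        then obtain n where "n \<ge> 1" "x \<in> preim M (\<theta> ^^ n) A" unfolding U_def by auto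
        then show ?thesis using x unfolding C_def by (intro UN_I[of n]) auto
      next
        case False
        then show ?thesis using x B sets.sets_into_space unfolding C_def by (intro UN_I[of 0]) auto
      qed
    qed
    then have "V B \<le> V (\<Union>n. C n)" using up_props(5)[OF up] B Cs by blast
    then show False using null_union[OF up cb Cs Cz] VB by simp
  qed
qed

lemma iv_to_i:
  assumes up: "upper_prob M V" and th: "\<theta> \<in> M \<rightarrow>\<^sub>M M" and iv: "cond_iv M V \<theta>"
  shows "ergodic M V \<theta>"
  unfolding ergodic_def
proof (intro allI impI)
  fix B assume inv: "invariant_set M \<theta> B"
  then have B: "B \<in> sets M" unfolding invariant_set_def by auto
  have "V B = 0 \<or> V (space M - B) = 0"
  proof (rule ccontr)
    assume nt: "\<not> ?thesis"
    have SB: "space M - B \<in> sets M" using B by blast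
    have "0 \<le> V B" "0 \<le> V (space M - B)" using up_props(3)[OF up] B SB by blast+
    then have p: "V B > 0" "V (space M - B) > 0" using nt by linarith+
    obtain n where "V (preim M (\<theta> ^^ n) B \<inter> (space M - B)) > 0"
      using iv B SB p unfolding cond_iv_def by blast
    moreover have "preim M (\<theta> ^^ n) B \<inter> (space M - B) = {}"
      using invariant_iter[OF th inv, of n] by blast
    ultimately show False using up_props(1)[OF up] by simp
  qed
  then show "V B \<in> {0, 1} \<and> (V B = 0 \<or> V (space M - B) = 0)" using zero_or_one[OF up B] by auto
qed

lemma i_to_iii:
  assumes up: "upper_prob M V" and ca: "cont_from_above M V"
    and th: "\<theta> \<in> M \<rightarrow>\<^sub>M M" and pr: "preserves M V \<theta>"
    and erg: "ergodic M V \<theta>"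
  shows "cond_iii M V \<theta>"
  unfolding cond_iii_def
proof (intro ballI impI)
  fix A assume A: "A \<in> sets M" and VA: "V A > 0"
  define U where "U k = (\<Union>n\<in>{k..}. preim M (\<theta> ^^ n) A)" for k
  have Us: "U k \<in> sets M" for k unfolding U_def using preim_sets[OF th A] by auto
  have shift: "preim M (\<theta>^^k) (U 0) = U k" for k
  proof (intro set_eqI iffI)
    fix x assume "x \<in> preim M (\<theta>^^k) (U 0)"
    then have xs: "x \<in> space M" and "(\<theta>^^k) x \<in> U 0" unfolding preim_def by auto
    then obtain n where "(\<theta>^^k) x \<in> preim M (\<theta> ^^ n) A" unfolding U_def by auto
    then have "x \<in> preim M (\<theta> ^^ (n+k)) A" using preim_shift[OF th xs] by blast
    then show "x \<in> U k" unfolding U_def by (intro UN_I[of "n+k"]) auto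
  next
    fix x assume "x \<in> U k"
    then obtain n where n: "n \<ge> k" "x \<in> preim M (\<theta> ^^ n) A" unfolding U_def by auto
    have xs: "x \<in> space M" by (rule preim_space[OF n(2)])
    have "x \<in> preim M (\<theta> ^^ ((n-k)+k)) A" using n by simp
    then have "(\<theta>^^k) x \<in> preim M (\<theta> ^^ (n-k)) A" using preim_shift[OF th xs] by blast
    then have "(\<theta>^^k) x \<in> U 0" unfolding U_def by auto
    then show "x \<in> preim M (\<theta>^^k) (U 0)" using xs unfolding preim_def by auto
  qed
  have VU: "V (U k) = V (U 0)" for k using preserves_iter[OF th pr Us[of 0], of k] shift by simp
  have dec: "decseq U" unfolding decseq_def U_def by (meson UN_mono atLeast_subset_iff order_refl)
  have "(\<lambda>k. V (U k)) \<longlonglongrightarrow> V (\<Inter>k. U k)" using ca dec Us unfolding cont_from_above_def by blast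
  moreover have "(\<lambda>k. V (U k)) = (\<lambda>k. V (U 0))" by (intro ext) (rule VU)
  ultimately have "(\<lambda>k. V (U 0)) \<longlonglongrightarrow> V (\<Inter>k. U k)" by simp
  then have VL: "V (limsup_set M \<theta> A) = V (U 0)"
    using LIMSEQ_unique[OF _ tendsto_const] unfolding limsup_set_def U_def by metis
  have "preim M (\<theta>^^1) A \<subseteq> U 0" unfolding U_def by (intro UN_upper) auto
  then have "V (preim M (\<theta>^^1) A) \<le> V (U 0)" using up_props(5)[OF up] preim_sets[OF th A] Us by blast
  then have "V (limsup_set M \<theta> A) > 0" using VL preserves_iter[OF th pr A, of 1] VA by simp
  then have "V (space M - limsup_set M \<theta> A) = 0"
    using erg limsup_invariant[OF th A] unfolding ergodic_def by auto
  moreover have "limsup_set M \<theta> A \<subseteq> U 1" unfolding limsup_set_def U_def by blast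
  moreover have "U 1 = (\<Union>n\<in>{1..}. preim M (\<theta> ^^ n) A)" unfolding U_def by simp
  ultimately show "V (space M - (\<Union>n\<in>{1..}. preim M (\<theta> ^^ n) A)) = 0"
    using up_props(5)[OF up, of "space M - U 1" "space M - limsup_set M \<theta> A"]
      up_props(3)[OF up, of "space M - U 1"] Us limsup_sets[OF th A]
    by (metis Diff_mono order_antisym order_refl sets.compl_sets)
qed

theorem theorem4:
  fixes M :: "'a measure" and V :: "'a set \<Rightarrow> real" and \<theta> :: "'a \<Rightarrow> 'a"
  assumes "upper_prob M V"
    and "cont_from_below M V"
    and "\<theta> \<in> M \<rightarrow>\<^sub>M M"
    and "preserves M V \<theta>"
  shows "(ergodic M V \<theta> \<longleftrightarrow> cond_ii M V \<theta>)
     \<and> (cond_iii M V \<theta> \<longrightarrow> cond_iv M V \<theta>)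
     \<and> (cond_iv M V \<theta> \<longrightarrow> ergodic M V \<theta>)
     \<and> (continuous_sf M V \<longrightarrow> cond_ii M V \<theta> \<longrightarrow> cond_iii M V \<theta>)"
proof (intro conjI impI)
  show "ergodic M V \<theta> \<longleftrightarrow> cond_ii M V \<theta>"
    using i_to_ii[OF assms] ii_to_i[OF assms(1)] by (rule iffI)
  show "cond_iii M V \<theta> \<Longrightarrow> cond_iv M V \<theta>" by (rule iii_to_iv[OF assms(1-3)])
  show "cond_iv M V \<theta> \<Longrightarrow> ergodic M V \<theta>" by (rule iv_to_i[OF assms(1,3)])
  assume c: "continuous_sf M V" and ii: "cond_ii M V \<theta>"
  have ca: "cont_from_above M V" using c unfolding continuous_sf_def by (rule conjunct2)
  show "cond_iii M V \<theta>" by (rule i_to_iii[OF assms(1) ca assms(3,4) ii_to_i[OF assms(1) ii]])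
qed

end
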